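(* Let $A$ and $B$ be $J^*$-algebras. Suppose that $h : A \to B$ is a mapping with $h(0)=0$ for which there exists a function $\varphi: A\times A\times A\to [0, \infty)$ such that $$\widetilde{\varphi}(x, y, z):=\frac{1}{2}\sum_{n=0}^\infty 2^{-n}\varphi(2^nx,2^ny,2^nz)<\infty\quad\text{for all } x,y,z\in A,$$ and $$\|h(\mu x+\mu y+zz^*z)-\mu h(x)-\mu h(y)-h(z)h(z)^*h(z)\|\leq \varphi(x,y,z)$$ for $\mu\in\{1,i\}$ and all $x, y, z\in A$. If for each fixed $x\in A$ the function $\mathbb{R}\ni t\mapsto h(tx)\in B$ is continuous, then there exists a unique $J^*$-homomorphism $T : A \to B$ such that $$\|h(x)-T(x)\|\leq\widetilde{\varphi}(x, x, 0)\quad\text{for all } x\in A.$$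
   Context: A $J^*$-algebra is a norm-closed complex linear subspace $A$ of a $C^*$-algebra such that $xx^*x\in A$ whenever $x\in A$ (with the norm, involution and product inherited from the ambient $C^*$-algebra). For $J^*$-algebras $A$ and $B$, a $J^*$-homomorphism is a $\mathbb{C}$-linear mapping $T : A \to B$ such that $T(xx^*x)=T(x)T(x)^*T(x)$ for all $x\in A$. *)

theory Defs
  imports "HOL-Analysis.Analysis"
begin

text \<open>Abstract (not necessarily unital) C*-algebras: complete normed real algebras
  equipped with a complex scalar multiplication extending the real one, and an
  involution satisfying the C*-identity.\<close>

class cstar_algebra = real_normed_algebra + complete_space +
  fixes scaleC :: "complex \<Rightarrow> 'a \<Rightarrow> 'a"
    and star :: "'a \<Rightarrow> 'a"
  assumes scaleC_add_right: "scaleC c (x + y) = scaleC c x + scaleC c y"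
    and scaleC_add_left: "scaleC (c + d) x = scaleC c x + scaleC d x"
    and scaleC_scaleC: "scaleC c (scaleC d x) = scaleC (c * d) x"
    and scaleC_one: "scaleC 1 x = x"
    and scaleC_of_real: "scaleC (complex_of_real r) x = scaleR r x"
    and scaleC_mult_left: "scaleC c (x * y) = scaleC c x * y"
    and scaleC_mult_right: "scaleC c (x * y) = x * scaleC c y"
    and norm_scaleC: "norm (scaleC c x) = cmod c * norm x"
    and star_star: "star (star x) = x"
    and star_add: "star (x + y) = star x + star y"
    and star_scaleC: "star (scaleC c x) = scaleC (cnj c) (star x)"
    and star_mult: "star (x * y) = star y * star x"
    and cstar_identity: "norm (star x * x) = (norm x)\<^sup>2"

definition jstar_algebra :: "'a::cstar_algebra set \<Rightarrow> bool" where
  "jstar_algebra A \<longleftrightarrow>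
     0 \<in> A \<and> (\<forall>x\<in>A. \<forall>y\<in>A. x + y \<in> A) \<and> (\<forall>c. \<forall>x\<in>A. scaleC c x \<in> A)
     \<and> closed A \<and> (\<forall>x\<in>A. x * star x * x \<in> A)"

text \<open>J*-homomorphism from A into B (only the values on A matter).\<close>

definition jstar_hom :: "'a::cstar_algebra set \<Rightarrow> 'b::cstar_algebra set \<Rightarrow> ('a \<Rightarrow> 'b) \<Rightarrow> bool" where
  "jstar_hom A B T \<longleftrightarrow>
     (\<forall>x\<in>A. T x \<in> B)
     \<and> (\<forall>x\<in>A. \<forall>y\<in>A. T (x + y) = T x + T y)
     \<and> (\<forall>c. \<forall>x\<in>A. T (scaleC c x) = scaleC c (T x))
     \<and> (\<forall>x\<in>A. T (x * star x * x) = T x * star (T x) * T x)"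

definition phi_tilde :: "('a::real_vector \<Rightarrow> 'a \<Rightarrow> 'a \<Rightarrow> real) \<Rightarrow> 'a \<Rightarrow> 'a \<Rightarrow> 'a \<Rightarrow> real" where
  "phi_tilde \<phi> x y z =
     (1/2) * (\<Sum>n. (1/2)^n * \<phi> ((2^n) *\<^sub>R x) ((2^n) *\<^sub>R y) ((2^n) *\<^sub>R z))"

end

theory Submission imports Defs begin

context cstar_algebra begin

subclass banach ..

lemma scaleC_zero [simp]: "scaleC c 0 = 0"
  using scaleC_add_right[of c 0 0] by simp

lemma star_zero [simp]: "star 0 = 0"
  using star_add[of 0 0] by simp

lemma star_scaleR: "star (r *\<^sub>R x) = r *\<^sub>R star x"
  using star_scaleC[of "complex_of_real r" x] by (simp add: scaleC_of_real)

lemma star_minus: "star (- x) = - star x"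
  using star_add[of x "-x"] by (simp add: eq_neg_iff_add_eq_0 add.commute)

lemma star_diff: "star (x - y) = star x - star y"
  using star_add[of x "-y"] star_minus[of y] by simp

lemma norm_star: "norm (star x) = norm x"
proof -
  have a: "norm y \<le> norm (star y)" for y
  proof (cases "y = 0")
    case False
    have "(norm y)^2 \<le> norm (star y) * norm y"
      using cstar_identity[of y] norm_mult_ineq[of "star y" y] by simp
    then show ?thesis using False by (simp add: power2_eq_square)
  qed simp
  show ?thesis using a[of x] a[of "star x"] star_star[of x] by simp
qed

lemma scaleC_scaleR: "scaleC c (r *\<^sub>R x) = r *\<^sub>R scaleC c x"
  by (metis scaleC_of_real scaleC_scaleC mult.commute)

lemma scaleC_decomp: "scaleC c x = Re c *\<^sub>R x + Im c *\<^sub>R scaleC \<i> x"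
proof -
  have "c = complex_of_real (Re c) + complex_of_real (Im c) * \<i>"
    by (simp add: complex_eq_iff)
  then have "scaleC c x = scaleC (complex_of_real (Re c)) x + scaleC (complex_of_real (Im c)) (scaleC \<i> x)"
    by (metis scaleC_add_left scaleC_scaleC)
  then show ?thesis by (simp add: scaleC_of_real)
qed

end

lemma bounded_linear_star: "bounded_linear (star :: 'a::cstar_algebra \<Rightarrow> 'a)"
proof (rule bounded_linear_intro[where K=1])
  show "star (x + y) = star x + star y" for x y :: 'a by (rule star_add)
  show "star (r *\<^sub>R x) = r *\<^sub>R star x" for r and x :: 'a by (rule star_scaleR)
  show "norm (star x) \<le> norm x * 1" for x :: 'a by (simp add: norm_star)
qed

lemma bounded_linear_scaleC: "bounded_linear (scaleC c :: 'a::cstar_algebra \<Rightarrow> 'a)"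
proof (rule bounded_linear_intro[where K="cmod c"])
  show "scaleC c (x + y) = scaleC c x + scaleC c y" for x y :: 'a by (rule scaleC_add_right)
  show "scaleC c (r *\<^sub>R x) = r *\<^sub>R scaleC c x" for r and x :: 'a by (rule scaleC_scaleR)
  show "norm (scaleC c x) \<le> norm x * cmod c" for x :: 'a by (simp add: norm_scaleC)
qed

lemma additive_bounded_linear:
  fixes G :: "real \<Rightarrow> 'b::real_normed_vector"
  assumes add: "\<And>s t. G (s+t) = G s + G t" and "\<delta> > 0"
    and bnd: "\<And>u. \<bar>u\<bar> < \<delta> \<Longrightarrow> norm (G u) \<le> K"
  shows "G r = r *\<^sub>R G 1"
proof -
  have G0: "G 0 = 0" using add[of 0 0] by simp
  have Gneg: "G (-t) = - G t" for t using add[of t "-t"] G0 by (simp add: eq_neg_iff_add_eq_0 add.commute)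
  have Gnat: "G (real n * t) = real n *\<^sub>R G t" for n t
    by (induction n) (auto simp: G0 add distrib_right scaleR_add_left)
  have Gint: "G (of_int k * t) = of_int k *\<^sub>R G t" for k t
  proof (cases "k \<ge> 0")
    case True
    then show ?thesis using Gnat[of "nat k" t] by simp
  next
    case False
    then have "G (of_int k * t) = G (- (real (nat (-k)) * t))" by simp
    also have "\<dots> = - (real (nat (-k)) *\<^sub>R G t)" by (simp only: Gneg Gnat)
    also have "\<dots> = of_int k *\<^sub>R G t" using False by simp
    finally show ?thesis .
  qed
  obtain M :: nat where M: "1/\<delta> < real M" using reals_Archimedean2 by blast
  have Mpos: "real M > 0" using M \<open>\<delta>>0\<close>
    by (smt (verit) divide_pos_pos)
  have Md: "1 / real M < \<delta>" using M \<open>\<delta>>0\<close> Mpos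
    by (simp add: field_simps)
  have bnd1: "norm (G u) \<le> real M * K" if "\<bar>u\<bar> < 1" for u
  proof -
    have "\<bar>u / real M\<bar> < \<delta>"
      using that Mpos Md by (simp add: abs_div field_simps) 
    then have "norm (G (u / real M)) \<le> K" by (rule bnd)
    moreover have "G u = real M *\<^sub>R G (u / real M)"
      using Gnat[of M "u / real M"] Mpos by simp
    ultimately show ?thesis using Mpos by (simp add: mult_left_mono)
  qed
  define c where "c = norm (G r - r *\<^sub>R G 1)"
  have key: "real N * c \<le> real M * K + norm (G 1)" for N :: nat
  proof -
    define k where "k = floor (real N * r)"
    define u where "u = real N * r - of_int k"
    have u01: "0 \<le> u" "u < 1" unfolding u_def k_def by linarith+
    have "real N *\<^sub>R (G r - r *\<^sub>R G 1) = G (real N * r) - (real N * r) *\<^sub>R G 1"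
      by (simp add: Gnat[of N r] scaleR_diff_right)
    also have "G (real N * r) = G (of_int k * 1) + G u"
      using add[of "of_int k * 1" u] unfolding u_def by simp
    also have "(real N * r) *\<^sub>R G 1 = (of_int k) *\<^sub>R G 1 + u *\<^sub>R G 1"
      unfolding u_def by (simp add: scaleR_left_diff_distrib)
    finally have e: "real N *\<^sub>R (G r - r *\<^sub>R G 1) = G u - u *\<^sub>R G 1"
      using Gint[of k 1] by simp
    have "real N * c = norm (G u - u *\<^sub>R G 1)"
      unfolding c_def e[symmetric] by simp
    also have "\<dots> \<le> norm (G u) + norm (u *\<^sub>R G 1)" by (rule norm_triangle_ineq4)
    also have "\<dots> \<le> real M * K + norm (G 1)"
      using bnd1[of u] u01 by (auto intro!: add_mono mult_left_le_one_le)
    finally show ?thesis .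
  qed
  have "c = 0"
  proof (rule ccontr)
    assume "c \<noteq> 0"
    then have cp: "c > 0" unfolding c_def by simp
    obtain N :: nat where N: "(real M * K + norm (G 1)) / c < real N" using reals_Archimedean2 by blast
    then have "real M * K + norm (G 1) < real N * c" using cp by (simp add: field_simps)
    with key[of N] show False by simp
  qed
  then show ?thesis unfolding c_def by simp
qed

lemma baire_bound:
  fixes F :: "nat \<Rightarrow> real \<Rightarrow> 'b::real_normed_vector"
  assumes cont: "\<And>n. continuous_on UNIV (F n)"
    and lim: "\<And>t. (\<lambda>n. F n t) \<longlonglongrightarrow> G t"
  shows "\<exists>a \<delta> K. \<delta> > 0 \<and> (\<forall>t. \<bar>t - a\<bar> < \<delta> \<longrightarrow> norm (G t) \<le> K)"
proof -
  define C where "C m = {t. \<forall>n. norm (F n t) \<le> real m}" for m :: nat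
  have clo: "closed (C m)" for m
  proof -
    have "C m = (\<Inter>n. {t. norm (F n t) \<le> real m})" unfolding C_def by auto
    moreover have "closed {t. norm (F n t) \<le> real m}" for n
      by (intro closed_Collect_le continuous_on_norm cont continuous_on_const)
    ultimately show ?thesis by auto
  qed
  have cover: "\<exists>m. t \<in> C m" for t
  proof -
    have "Bseq (\<lambda>n. F n t)" using lim[of t] by (intro convergent_imp_Bseq convergentI)
    then obtain K where K: "\<And>n. norm (F n t) \<le> K" unfolding Bseq_def by auto
    obtain m :: nat where "K \<le> real m" using real_arch_simple by blast
    then show ?thesis using K unfolding C_def by (auto intro: order_trans)
  qed
  have "\<exists>m. closure (- C m) \<noteq> UNIV"
  proof (rule ccontr)
    assume "\<not> ?thesis"
    then have dense: "\<And>m. closure (- C m) = UNIV" by simp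
    have "(UNIV::real set) \<subseteq> closure (\<Inter>(range (\<lambda>m. - C m)))"
    proof (rule Baire)
      fix T assume "T \<in> range (\<lambda>m. - C m)"
      then obtain m where "T = - C m" by auto
      then show "openin (top_of_set UNIV) T \<and> UNIV \<subseteq> closure T"
        using clo[of m] dense[of m] by (auto simp: open_Compl)
    qed auto
    moreover have "\<Inter>(range (\<lambda>m. - C m)) = {}" using cover by auto
    ultimately show False by simp
  qed
  then obtain m where "closure (- C m) \<noteq> UNIV" by blast
  then have "- interior (C m) \<noteq> UNIV" by (simp add: closure_complement)
  then obtain a where "a \<in> interior (C m)" by blast
  moreover have "open (interior (C m))" by simp
  ultimately obtain e where e0: "e > 0" "ball a e \<subseteq> interior (C m)"
    by (meson open_contains_ball)
  then have e: "e > 0" "ball a e \<subseteq> C m" using interior_subset by blast+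
  have "norm (G t) \<le> real m" if "\<bar>t - a\<bar> < e" for t
  proof -
    have "t \<in> C m" using e that by (auto simp: dist_real_def)
    then have "\<forall>n. norm (F n t) \<le> real m" unfolding C_def by auto
    then show ?thesis
      by (intro Lim_norm_ubound[OF _ lim[of t]]) auto
  qed
  then show ?thesis using e by blast
qed


lemma jstar_hom_scaleR:
  assumes "jstar_hom A B S" "x \<in> A"
  shows "S (r *\<^sub>R x) = r *\<^sub>R S x"
  using assms unfolding jstar_hom_def by (metis scaleC_of_real)

theorem theorem2p5:
  fixes A :: "'a::cstar_algebra set" and B :: "'b::cstar_algebra set"
    and h :: "'a \<Rightarrow> 'b" and \<phi> :: "'a \<Rightarrow> 'a \<Rightarrow> 'a \<Rightarrow> real"
  assumes "jstar_algebra A" and "jstar_algebra B"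
    and "\<forall>x\<in>A. h x \<in> B"
    and "h 0 = 0"
    and "\<forall>x\<in>A. \<forall>y\<in>A. \<forall>z\<in>A. \<phi> x y z \<ge> 0"
    and "\<forall>x\<in>A. \<forall>y\<in>A. \<forall>z\<in>A.
           summable (\<lambda>n. (1/2)^n * \<phi> ((2^n) *\<^sub>R x) ((2^n) *\<^sub>R y) ((2^n) *\<^sub>R z))"
    and "\<forall>\<mu>\<in>{1, \<i>}. \<forall>x\<in>A. \<forall>y\<in>A. \<forall>z\<in>A.
           norm (h (scaleC \<mu> x + scaleC \<mu> y + z * star z * z) - scaleC \<mu> (h x)
                 - scaleC \<mu> (h y) - h z * star (h z) * h z) \<le> \<phi> x y z"
    and "\<forall>x\<in>A. continuous_on UNIV (\<lambda>t::real. h (t *\<^sub>R x))"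
  shows "\<exists>T. jstar_hom A B T \<and> (\<forall>x\<in>A. norm (h x - T x) \<le> phi_tilde \<phi> x x 0)
           \<and> (\<forall>T'. jstar_hom A B T' \<and> (\<forall>x\<in>A. norm (h x - T' x) \<le> phi_tilde \<phi> x x 0)
                  \<longrightarrow> (\<forall>x\<in>A. T' x = T x))"
proof -
  note JA = assms(1)[unfolded jstar_algebra_def]
  note JB = assms(2)[unfolded jstar_algebra_def]
  have A0: "0 \<in> A" and Aadd: "\<And>x y. x \<in> A \<Longrightarrow> y \<in> A \<Longrightarrow> x + y \<in> A"
    and AC: "\<And>c x. x \<in> A \<Longrightarrow> scaleC c x \<in> A"
    and Atrip: "\<And>x. x \<in> A \<Longrightarrow> x * star x * x \<in> A" using JA by auto
  have AR: "r *\<^sub>R x \<in> A" if "x \<in> A" for r x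
    using AC[OF that, of "complex_of_real r"] by (simp add: scaleC_of_real)
  have Bcl: "closed B" using JB by auto
  have BR: "r *\<^sub>R x \<in> B" if "x \<in> B" for r x
    using JB that scaleC_of_real[of r x] by metis
  have hB: "\<And>x. x \<in> A \<Longrightarrow> h x \<in> B" using assms(3) by auto
  have h0: "h 0 = 0" by (rule assms(4))
  have nn: "\<And>x y z. x \<in> A \<Longrightarrow> y \<in> A \<Longrightarrow> z \<in> A \<Longrightarrow> \<phi> x y z \<ge> 0" using assms(5) by auto
  have summ: "\<And>x y z. x \<in> A \<Longrightarrow> y \<in> A \<Longrightarrow> z \<in> A \<Longrightarrow>
     summable (\<lambda>n. (1/2)^n * \<phi> ((2^n) *\<^sub>R x) ((2^n) *\<^sub>R y) ((2^n) *\<^sub>R z))"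
    using assms(6) by auto
  have tz: "(\<lambda>n. (1/2)^n * \<phi> ((2^n) *\<^sub>R x) ((2^n) *\<^sub>R y) ((2^n) *\<^sub>R z)) \<longlonglongrightarrow> 0"
    if "x \<in> A" "y \<in> A" "z \<in> A" for x y z
    using summable_LIMSEQ_zero[OF summ[OF that]] .
  have fe1: "\<forall>x\<in>A. \<forall>y\<in>A. \<forall>z\<in>A.
           norm (h (scaleC 1 x + scaleC 1 y + z * star z * z) - scaleC 1 (h x)
                 - scaleC 1 (h y) - h z * star (h z) * h z) \<le> \<phi> x y z"
    using assms(7) by blast
  have fei: "\<forall>x\<in>A. \<forall>y\<in>A. \<forall>z\<in>A.
           norm (h (scaleC \<i> x + scaleC \<i> y + z * star z * z) - scaleC \<i> (h x)
                 - scaleC \<i> (h y) - h z * star (h z) * h z) \<le> \<phi> x y z"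
    using assms(7) by blast
  have ineq_add: "norm (h (x + y) - h x - h y) \<le> \<phi> x y 0" if "x \<in> A" "y \<in> A" for x y
  proof -
    have "norm (h (scaleC 1 x + scaleC 1 y + 0 * star 0 * 0) - scaleC 1 (h x)
                 - scaleC 1 (h y) - h 0 * star (h 0) * h 0) \<le> \<phi> x y 0"
      using fe1 that A0 by blast
    then show ?thesis by (simp add: scaleC_one h0)
  qed
  have ineq_i: "norm (h (scaleC \<i> x) - scaleC \<i> (h x)) \<le> \<phi> x 0 0" if "x \<in> A" for x
  proof -
    have "norm (h (scaleC \<i> x + scaleC \<i> 0 + 0 * star 0 * 0) - scaleC \<i> (h x)
                 - scaleC \<i> (h 0) - h 0 * star (h 0) * h 0) \<le> \<phi> x 0 0"
      using fei that A0 by blast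
    then show ?thesis by (simp add: h0)
  qed
  have ineq_t: "norm (h (z * star z * z) - h z * star (h z) * h z) \<le> \<phi> 0 0 z" if "z \<in> A" for z
  proof -
    have "norm (h (scaleC 1 0 + scaleC 1 0 + z * star z * z) - scaleC 1 (h 0)
                 - scaleC 1 (h 0) - h z * star (h z) * h z) \<le> \<phi> 0 0 z"
      using fe1 that A0 by blast
    then show ?thesis by (simp add: scaleC_one h0)
  qed
  define g where "g n x = ((1/2::real)^n) *\<^sub>R h (((2::real)^n) *\<^sub>R x)" for n x
  define T where "T x = lim (\<lambda>n. g n x)" for x
  have gB: "g n x \<in> B" if "x \<in> A" for n x
    unfolding g_def by (intro BR hB AR that)
  have conv: "(\<lambda>n. g n x) \<longlonglongrightarrow> T x \<and> norm (h x - T x) \<le> phi_tilde \<phi> x x 0" if xA: "x \<in> A" for x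
  proof -
    define a where "a k = (1/2::real)^k * \<phi> (((2::real)^k) *\<^sub>R x) (((2::real)^k) *\<^sub>R x) 0" for k
    have suma: "summable a" using summ[OF xA xA A0] unfolding a_def by simp
    define d where "d k = g (Suc k) x - g k x" for k
    have dnorm: "norm (d k) \<le> (1/2) * a k" for k
    proof -
      define y where "y = ((2::real)^k) *\<^sub>R x"
      have yA: "y \<in> A" unfolding y_def by (rule AR[OF xA])
      have "d k = ((1/2::real)^Suc k) *\<^sub>R (h (y + y) - h y - h y)"
      proof -
        have "((2::real)^Suc k) *\<^sub>R x = y + y" unfolding y_def
          by (simp add: scaleR_2[symmetric])
        moreover have "((1/2::real)^k) *\<^sub>R h y = ((1/2::real)^Suc k) *\<^sub>R (h y + h y)"
          by (simp add: scaleR_2[symmetric])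
        ultimately show ?thesis
          unfolding d_def g_def y_def[symmetric] by (simp add: algebra_simps)
      qed
      then have "norm (d k) = (1/2)^Suc k * norm (h (y + y) - h y - h y)" by simp
      also have "\<dots> \<le> (1/2)^Suc k * \<phi> y y 0"
        by (intro mult_left_mono ineq_add yA) simp
      finally show ?thesis unfolding a_def y_def by simp
    qed
    have sumhalf: "summable (\<lambda>k. (1/2) * a k)" using suma by (rule summable_mult)
    have sumnd: "summable (\<lambda>k. norm (d k))"
      by (rule summable_norm_comparison_test[OF _ sumhalf]) (use dnorm in auto)
    then have sumd: "summable d" by (rule summable_norm_cancel)
    then have "(\<lambda>n. \<Sum>k<n. d k) \<longlonglongrightarrow> suminf d" by (rule summable_LIMSEQ)
    moreover have "(\<Sum>k<n. d k) = g n x - h x" for n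
      unfolding d_def by (subst sum_lessThan_telescope) (simp add: g_def)
    ultimately have "(\<lambda>n. g n x - h x) \<longlonglongrightarrow> suminf d" by simp
    then have "(\<lambda>n. g n x - h x + h x) \<longlonglongrightarrow> suminf d + h x" by (intro tendsto_add tendsto_const)
    then have lim1: "(\<lambda>n. g n x) \<longlonglongrightarrow> suminf d + h x" by simp
    then have Tx: "T x = suminf d + h x" unfolding T_def by (rule limI)
    have "norm (h x - T x) = norm (suminf d)" unfolding Tx by (simp add: norm_minus_commute)
    also have "\<dots> \<le> (\<Sum>k. norm (d k))" by (rule summable_norm[OF sumnd])
    also have "\<dots> \<le> (\<Sum>k. (1/2) * a k)" by (rule suminf_le[OF dnorm sumnd sumhalf])
    also have "\<dots> = phi_tilde \<phi> x x 0"
      unfolding phi_tilde_def a_def by (subst suminf_mult[OF suma[unfolded a_def]]) simp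
    finally show ?thesis using lim1 Tx by simp
  qed
  have lim: "(\<lambda>n. g n x) \<longlonglongrightarrow> T x" if "x \<in> A" for x using conv[OF that] by simp
  have TB: "T x \<in> B" if "x \<in> A" for x
    by (rule closed_sequentially[OF Bcl _ lim[OF that]]) (rule gB[OF that])
  have Tadd: "T (x + y) = T x + T y" if xA: "x \<in> A" and yA: "y \<in> A" for x y
  proof -
    have l1: "(\<lambda>n. g n (x + y) - g n x - g n y) \<longlonglongrightarrow> T (x + y) - T x - T y"
      by (intro tendsto_diff lim Aadd xA yA)
    have l2: "(\<lambda>n. g n (x + y) - g n x - g n y) \<longlonglongrightarrow> 0"
    proof (rule Lim_null_comparison[OF _ tz[OF xA yA A0]])
      show "\<forall>\<^sub>F n in sequentially. norm (g n (x + y) - g n x - g n y)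
          \<le> (1/2)^n * \<phi> ((2^n) *\<^sub>R x) ((2^n) *\<^sub>R y) ((2^n) *\<^sub>R 0)"
      proof (intro always_eventually allI)
        fix n
        have "g n (x + y) - g n x - g n y = ((1/2::real)^n) *\<^sub>R
            (h (((2::real)^n) *\<^sub>R x + ((2::real)^n) *\<^sub>R y) - h (((2::real)^n) *\<^sub>R x) - h (((2::real)^n) *\<^sub>R y))"
          unfolding g_def by (simp add: scaleR_add_right scaleR_diff_right)
        then have "norm (g n (x + y) - g n x - g n y) = (1/2)^n *
            norm (h (((2::real)^n) *\<^sub>R x + ((2::real)^n) *\<^sub>R y) - h (((2::real)^n) *\<^sub>R x) - h (((2::real)^n) *\<^sub>R y))"
          by simp
        also have "\<dots> \<le> (1/2)^n * \<phi> ((2^n) *\<^sub>R x) ((2^n) *\<^sub>R y) 0"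
          by (intro mult_left_mono ineq_add AR xA yA) simp
        finally show "norm (g n (x + y) - g n x - g n y)
          \<le> (1/2)^n * \<phi> ((2^n) *\<^sub>R x) ((2^n) *\<^sub>R y) ((2^n) *\<^sub>R 0)" by simp
      qed
    qed
    from LIMSEQ_unique[OF l1 l2] show ?thesis by (simp add: algebra_simps)
  qed
  have Ti: "T (scaleC \<i> x) = scaleC \<i> (T x)" if xA: "x \<in> A" for x
  proof -
    have l1: "(\<lambda>n. g n (scaleC \<i> x) - scaleC \<i> (g n x)) \<longlonglongrightarrow> T (scaleC \<i> x) - scaleC \<i> (T x)"
      by (intro tendsto_diff lim AC xA bounded_linear.tendsto[OF bounded_linear_scaleC])
    have l2: "(\<lambda>n. g n (scaleC \<i> x) - scaleC \<i> (g n x)) \<longlonglongrightarrow> 0"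
    proof (rule Lim_null_comparison[OF _ tz[OF xA A0 A0]])
      show "\<forall>\<^sub>F n in sequentially. norm (g n (scaleC \<i> x) - scaleC \<i> (g n x))
          \<le> (1/2)^n * \<phi> ((2^n) *\<^sub>R x) ((2^n) *\<^sub>R 0) ((2^n) *\<^sub>R 0)"
      proof (intro always_eventually allI)
        fix n
        have "g n (scaleC \<i> x) - scaleC \<i> (g n x) = ((1/2::real)^n) *\<^sub>R
            (h (scaleC \<i> (((2::real)^n) *\<^sub>R x)) - scaleC \<i> (h (((2::real)^n) *\<^sub>R x)))"
          unfolding g_def by (simp add: scaleC_scaleR scaleR_diff_right)
        then have "norm (g n (scaleC \<i> x) - scaleC \<i> (g n x)) = (1/2)^n *
            norm (h (scaleC \<i> (((2::real)^n) *\<^sub>R x)) - scaleC \<i> (h (((2::real)^n) *\<^sub>R x)))"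
          by simp
        also have "\<dots> \<le> (1/2)^n * \<phi> ((2^n) *\<^sub>R x) 0 0"
          by (intro mult_left_mono ineq_i AR xA) simp
        finally show "norm (g n (scaleC \<i> x) - scaleC \<i> (g n x))
          \<le> (1/2)^n * \<phi> ((2^n) *\<^sub>R x) ((2^n) *\<^sub>R 0) ((2^n) *\<^sub>R 0)" by simp
      qed
    qed
    from LIMSEQ_unique[OF l1 l2] show ?thesis by simp
  qed
  have TR: "T (r *\<^sub>R x) = r *\<^sub>R T x" if xA: "x \<in> A" for r x
  proof -
    define G where "G t = T (t *\<^sub>R x)" for t
    define F where "F n t = g n (t *\<^sub>R x)" for n t
    have Gadd: "G (s + t) = G s + G t" for s t
      unfolding G_def by (simp add: scaleR_add_left Tadd AR xA)
    have contF: "continuous_on UNIV (F n)" for n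
    proof -
      have c1: "continuous_on UNIV (\<lambda>s::real. h (s *\<^sub>R x))" using assms(8) xA by auto
      have "continuous_on UNIV (\<lambda>t::real. h ((2^n * t) *\<^sub>R x))"
        by (rule continuous_on_compose2[OF c1]) (auto intro!: continuous_intros)
      then have "continuous_on UNIV (\<lambda>t::real. ((1/2::real)^n) *\<^sub>R h ((2^n * t) *\<^sub>R x))"
        by (intro continuous_intros)
      then show ?thesis unfolding F_def g_def by (simp add: mult.commute)
    qed
    have limF: "(\<lambda>n. F n t) \<longlonglongrightarrow> G t" for t
      unfolding F_def G_def by (intro lim AR xA)
    obtain a \<delta> K where dK: "\<delta> > 0" "\<And>t. \<bar>t - a\<bar> < \<delta> \<Longrightarrow> norm (G t) \<le> K"
      using baire_bound[OF contF limF] by blast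
    have bnd: "norm (G u) \<le> 2 * K" if "\<bar>u\<bar> < \<delta>" for u
    proof -
      have "G u = G (a + u) - G a" using Gadd[of a u] by simp
      then have "norm (G u) \<le> norm (G (a + u)) + norm (G a)" by (simp add: norm_triangle_ineq4)
      also have "\<dots> \<le> K + K" using dK that by (intro add_mono) auto
      finally show ?thesis by simp
    qed
    have "G r = r *\<^sub>R G 1" by (rule additive_bounded_linear[OF Gadd dK(1) bnd])
    then show ?thesis unfolding G_def by simp
  qed
  have TC: "T (scaleC c x) = scaleC c (T x)" if xA: "x \<in> A" for c x
  proof -
    have "T (scaleC c x) = T (Re c *\<^sub>R x + Im c *\<^sub>R scaleC \<i> x)" by (subst scaleC_decomp[of c x]) (rule refl)
    also have "\<dots> = Re c *\<^sub>R T x + Im c *\<^sub>R scaleC \<i> (T x)"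
      by (simp add: Tadd AR AC xA TR Ti)
    also have "\<dots> = scaleC c (T x)" by (rule scaleC_decomp[of c "T x", symmetric])
    finally show ?thesis .
  qed
  have Tt: "T (z * star z * z) = T z * star (T z) * T z" if zA: "z \<in> A" for z
  proof -
    define w where "w = z * star z * z"
    have wA: "w \<in> A" unfolding w_def by (rule Atrip[OF zA])
    have sm: "strict_mono (\<lambda>n::nat. 3 * n)" by (rule strict_monoI) simp
    have l0: "(\<lambda>n. g (3 * n) w) \<longlonglongrightarrow> T w"
      using LIMSEQ_subseq_LIMSEQ[OF lim[OF wA] sm] by (simp add: o_def)
    have l1: "(\<lambda>n. g (3 * n) w - g n z * star (g n z) * g n z) \<longlonglongrightarrow> T w - T z * star (T z) * T z"
      by (intro tendsto_diff l0 tendsto_mult lim zA bounded_linear.tendsto[OF bounded_linear_star])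
    have l2: "(\<lambda>n. g (3 * n) w - g n z * star (g n z) * g n z) \<longlonglongrightarrow> 0"
    proof (rule Lim_null_comparison[OF _ tz[OF A0 A0 zA]])
      show "\<forall>\<^sub>F n in sequentially. norm (g (3 * n) w - g n z * star (g n z) * g n z)
          \<le> (1/2)^n * \<phi> ((2^n) *\<^sub>R 0) ((2^n) *\<^sub>R 0) ((2^n) *\<^sub>R z)"
      proof (intro always_eventually allI)
        fix n
        define y where "y = ((2::real)^n) *\<^sub>R z"
        have yA: "y \<in> A" unfolding y_def by (rule AR[OF zA])
        have e1: "((2::real)^(3*n)) *\<^sub>R w = y * star y * y"
          unfolding w_def y_def by (simp add: star_scaleR power_mult power3_eq_cube mult.commute)
        have e2: "g n z * star (g n z) * g n z = ((1/2::real)^(3*n)) *\<^sub>R (h y * star (h y) * h y)"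
          unfolding g_def y_def by (simp add: star_scaleR power_mult power3_eq_cube mult.commute)
        have "g (3 * n) w - g n z * star (g n z) * g n z
            = ((1/2::real)^(3*n)) *\<^sub>R (h (y * star y * y) - h y * star (h y) * h y)"
          unfolding e2 by (simp add: g_def e1 scaleR_diff_right)
        then have "norm (g (3 * n) w - g n z * star (g n z) * g n z)
            = (1/2)^(3*n) * norm (h (y * star y * y) - h y * star (h y) * h y)" by simp
        also have "\<dots> \<le> (1/2)^(3*n) * \<phi> 0 0 y"
          by (intro mult_left_mono ineq_t yA) simp
        also have "\<dots> \<le> (1/2)^n * \<phi> 0 0 y"
          by (intro mult_right_mono nn A0 yA power_decreasing) auto
        finally show "norm (g (3 * n) w - g n z * star (g n z) * g n z)
          \<le> (1/2)^n * \<phi> ((2^n) *\<^sub>R 0) ((2^n) *\<^sub>R 0) ((2^n) *\<^sub>R z)" by (simp add: y_def)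
      qed
    qed
    from LIMSEQ_unique[OF l1 l2] show ?thesis by (simp add: w_def)
  qed
  have hom: "jstar_hom A B T"
    unfolding jstar_hom_def using TB Tadd TC Tt by blast
  have est: "\<forall>x\<in>A. norm (h x - T x) \<le> phi_tilde \<phi> x x 0" using conv by blast
  have uniq: "T' x = T x" if hom': "jstar_hom A B T'"
    and est': "\<forall>x\<in>A. norm (h x - T' x) \<le> phi_tilde \<phi> x x 0" and xA: "x \<in> A" for T' x
  proof -
    define a where "a k = (1/2::real)^k * \<phi> (((2::real)^k) *\<^sub>R x) (((2::real)^k) *\<^sub>R x) 0" for k
    have suma: "summable a" using summ[OF xA xA A0] unfolding a_def by simp
    define b where "b n = suminf a - sum a {..<n}" for n
    have bl: "b \<longlonglongrightarrow> 0"
    proof -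
      have "(\<lambda>n. suminf a - sum a {..<n}) \<longlonglongrightarrow> suminf a - suminf a"
        by (intro tendsto_diff tendsto_const summable_LIMSEQ suma)
      then show ?thesis unfolding b_def by simp
    qed
    have ptb: "(1/2)^n * phi_tilde \<phi> (((2::real)^n) *\<^sub>R x) (((2::real)^n) *\<^sub>R x) 0 = (1/2) * b n" for n
    proof -
      have "(1/2::real)^n * phi_tilde \<phi> (((2::real)^n) *\<^sub>R x) (((2::real)^n) *\<^sub>R x) 0
          = (1/2) * ((1/2)^n * (\<Sum>k. (1/2)^k * \<phi> (((2::real)^(k+n)) *\<^sub>R x) (((2::real)^(k+n)) *\<^sub>R x) 0))"
        unfolding phi_tilde_def by (simp add: power_add mult.commute)
      also have "(1/2::real)^n * (\<Sum>k. (1/2)^k * \<phi> (((2::real)^(k+n)) *\<^sub>R x) (((2::real)^(k+n)) *\<^sub>R x) 0)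
          = (\<Sum>k. a (k + n))"
      proof -
        have s: "summable (\<lambda>k. (1/2::real)^k * \<phi> (((2::real)^(k+n)) *\<^sub>R x) (((2::real)^(k+n)) *\<^sub>R x) 0)"
          using summ[OF AR[OF xA, of "2^n"] AR[OF xA, of "2^n"] A0]
          by (simp add: power_add mult.commute)
        show ?thesis
          unfolding a_def suminf_mult[OF s, symmetric] by (simp add: power_add mult.left_commute mult.assoc)
      qed
      also have "(\<Sum>k. a (k + n)) = b n"
        unfolding b_def by (rule suminf_minus_initial_segment[OF suma])
      finally show ?thesis .
    qed
    have "norm (T' x - T x) \<le> b n" for n
    proof -
      define y where "y = ((2::real)^n) *\<^sub>R x"
      have yA: "y \<in> A" unfolding y_def by (rule AR[OF xA])
      have e: "T' y - T y = ((2::real)^n) *\<^sub>R (T' x - T x)"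
        unfolding y_def using jstar_hom_scaleR[OF hom' xA] jstar_hom_scaleR[OF hom xA]
        by (simp add: scaleR_diff_right)
      have n1: "norm (T' y - T y) = 2^n * norm (T' x - T x)" unfolding e by simp
      then have "norm (T' x - T x) = (1/2)^n * norm (T' y - T y)"
        by (simp add: power_one_over field_simps)
      also have "norm (T' y - T y) \<le> norm (h y - T' y) + norm (h y - T y)"
      proof -
        have "T' y - T y = (h y - T y) - (h y - T' y)" by simp
        then show ?thesis using norm_triangle_ineq4[of "h y - T y" "h y - T' y"] by (simp add: add.commute)
      qed
      also have "\<dots> \<le> 2 * phi_tilde \<phi> y y 0"
        using est'[rule_format, OF yA] est[rule_format, OF yA] by linarith
      finally have "norm (T' x - T x) \<le> (1/2)^n * (2 * phi_tilde \<phi> y y 0)" by simp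
      also have "\<dots> = b n" using ptb[of n] unfolding y_def by simp
      finally show ?thesis .
    qed
    then have "norm (T' x - T x) \<le> 0"
      by (intro LIMSEQ_le_const[OF bl]) auto
    then show ?thesis by simp
  qed
  show ?thesis using hom est uniq by blast
qed

end
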